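(* Let $A, B, C, X$ be spaces and let $f \colon A \times B \times C \to X$ be a map. Suppose that $f$ factors, up to homotopy, through each of the two projections $A\times B\times C \to A \times C$ and $A \times B \times C \to B \times C$. Then $f$ factors, up to homotopy, through the projection $A \times B \times C \to C$. *)

theory Defs
  imports "HOL-Analysis.Analysis"
begin

definition htpy_factors_through ::
  "'z topology \<Rightarrow> 'y topology \<Rightarrow> 'x topology \<Rightarrow> ('z \<Rightarrow> 'y) \<Rightarrow> ('z \<Rightarrow> 'x) \<Rightarrow> bool" where
  "htpy_factors_through Z Y X p f \<longleftrightarrow>
     (\<exists>g. continuous_map Y X g \<and> homotopic_with (\<lambda>h. True) Z X f (g \<circ> p))"

end

theory Submission
  imports Defs
begin

theorem lemma2p4:
  fixes A :: "'a topology" and B :: "'b topology" and C :: "'c topology"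
    and X :: "'x topology" and f :: "'a \<times> 'b \<times> 'c \<Rightarrow> 'x"
  assumes "continuous_map (prod_topology A (prod_topology B C)) X f"
    and "htpy_factors_through (prod_topology A (prod_topology B C)) (prod_topology A C) X
           (\<lambda>(a, b, c). (a, c)) f"
    and "htpy_factors_through (prod_topology A (prod_topology B C)) (prod_topology B C) X
           (\<lambda>(a, b, c). (b, c)) f"
    and "topspace X \<noteq> {}"
  shows "htpy_factors_through (prod_topology A (prod_topology B C)) C X
           (\<lambda>(a, b, c). c) f"
proof (cases "topspace B = {}")
  case True
  obtain x0 where x0: "x0 \<in> topspace X" using assms(4) by blast
  have "homotopic_with (\<lambda>h. True) (prod_topology A (prod_topology B C)) X f ((\<lambda>_. x0) \<circ> (\<lambda>(a, b, c). c))"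
    by (rule homotopic_with_equal) (use assms(1) True in auto)
  then show ?thesis unfolding htpy_factors_through_def using x0 by (intro exI[of _ "\<lambda>_. x0"]) auto
next
  case False
  then obtain b0 where b0: "b0 \<in> topspace B" by blast
  let ?Z = "prod_topology A (prod_topology B C)"
  obtain g where g: "continuous_map (prod_topology A C) X g"
    and fg: "homotopic_with (\<lambda>h. True) ?Z X f (g \<circ> (\<lambda>(a, b, c). (a, c)))"
    using assms(2) unfolding htpy_factors_through_def by blast
  obtain h where h: "continuous_map (prod_topology B C) X h"
    and fh: "homotopic_with (\<lambda>h. True) ?Z X f (h \<circ> (\<lambda>(a, b, c). (b, c)))"
    using assms(3) unfolding htpy_factors_through_def by blast
  have gh: "homotopic_with (\<lambda>h. True) ?Z X (g \<circ> (\<lambda>(a, b, c). (a, c))) (h \<circ> (\<lambda>(a, b, c). (b, c)))"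
    using fg fh homotopic_with_sym homotopic_with_trans by blast
  define s where "s = (\<lambda>(a::'a, c::'c). (a, b0, c))"
  have s: "continuous_map (prod_topology A C) ?Z s"
    unfolding s_def using b0
    by (auto simp: continuous_map_pairwise case_prod_unfold o_def continuous_map_fst continuous_map_snd)
  have "homotopic_with (\<lambda>h. True) (prod_topology A C) X
      ((g \<circ> (\<lambda>(a, b, c). (a, c))) \<circ> s) ((h \<circ> (\<lambda>(a, b, c). (b, c))) \<circ> s)"
    by (rule homotopic_with_compose_continuous_map_right[OF gh s]) auto
  moreover have "(g \<circ> (\<lambda>(a, b, c). (a, c))) \<circ> s = g"
    by (auto simp: s_def)
  moreover have "(h \<circ> (\<lambda>(a, b, c). (b, c))) \<circ> s = (\<lambda>c. h (b0, c)) \<circ> snd"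
    by (auto simp: s_def)
  ultimately have g2: "homotopic_with (\<lambda>h. True) (prod_topology A C) X g ((\<lambda>c. h (b0, c)) \<circ> snd)"
    by simp
  have ss: "continuous_map ?Z C (\<lambda>x. snd (snd x))"
    using continuous_map_compose[OF continuous_map_snd continuous_map_snd]
    by (simp add: o_def)
  have p: "continuous_map ?Z (prod_topology A C) (\<lambda>(a, b, c). (a, c))"
    by (auto simp: continuous_map_pairwise case_prod_unfold o_def continuous_map_fst continuous_map_snd
        continuous_map_of_fst continuous_map_of_snd ss)
  have "homotopic_with (\<lambda>h. True) ?Z X (g \<circ> (\<lambda>(a, b, c). (a, c))) (((\<lambda>c. h (b0, c)) \<circ> snd) \<circ> (\<lambda>(a, b, c). (a, c)))"
    by (rule homotopic_with_compose_continuous_map_right[OF g2 p]) auto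
  moreover have "((\<lambda>c. h (b0, c)) \<circ> snd) \<circ> (\<lambda>(a, b, c). (a, c)) = (\<lambda>c. h (b0, c)) \<circ> (\<lambda>(a, b, c). c)"
    by auto
  ultimately have "homotopic_with (\<lambda>h. True) ?Z X f ((\<lambda>c. h (b0, c)) \<circ> (\<lambda>(a, b, c). c))"
    using fg homotopic_with_trans by metis
  moreover have "continuous_map C X (\<lambda>c. h (b0, c))"
    using h b0 by (auto intro!: continuous_map_compose[OF _ h, unfolded o_def] simp: continuous_map_pairwise o_def)
  ultimately show ?thesis unfolding htpy_factors_through_def by blast
qed

end
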